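(* Let $N\ge2$, $\tau$ in the upper half plane, $L=2\pi i(\mathbb{Z}\tau+\mathbb{Z})$, $q=e^{2\pi i\tau}$, $\Phi(\tau,x)=(1-e^{-x})\prod_{m\ge1}(1-q^me^{-x})(1-q^me^x)/(1-q^m)^2$ and $f(x)=\Phi(\tau,x)\Phi(\tau,-\tfrac{2\pi i}{N})/\Phi(\tau,x-\tfrac{2\pi i}{N})$. Let $q'\ge1$ with $q'\equiv1\pmod N$, and let $x_1,\dots,x_{q'}\in\mathbb{C}\setminus L$ be pairwise inequivalent modulo $L$. Then $$\sum_{i=1}^{q'}\frac1{f(x_i)}\prod_{j\ne i}\frac1{f(x_j-x_i)}-\prod_{i=1}^{q'}\frac1{f(x_i)}=0.$$
   Context: The function $f$ is the one defining the elliptic genus of level $N$ (lattice $L$, $N$-division point $2\pi i/N$); it satisfies $f(x+2\pi i)=f(x)$, $f(x+2\pi i\tau)=e^{-2\pi i/N}f(x)$, and $1/f$ has simple poles exactly at $L$ with residue $1$ at $0$. *)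

theory Defs
  imports "HOL-Analysis.Analysis"
begin

definition qnome :: "complex \<Rightarrow> complex" where
  "qnome tau = exp (2 * pi * \<i> * tau)"

definition lattice :: "complex \<Rightarrow> complex set" where
  "lattice tau = {2 * pi * \<i> * (of_int m * tau + of_int n) | m n :: int. True}"

definition Phi :: "complex \<Rightarrow> complex \<Rightarrow> complex" where
  "Phi tau x = (1 - exp (- x)) *
     (\<Prod>m. (1 - qnome tau ^ Suc m * exp (- x)) * (1 - qnome tau ^ Suc m * exp x)
            / (1 - qnome tau ^ Suc m)^2)"

definition ellf :: "nat \<Rightarrow> complex \<Rightarrow> complex \<Rightarrow> complex" where
  "ellf N tau x = Phi tau x * Phi tau (- 2 * pi * \<i> / of_nat N) / Phi tau (x - 2 * pi * \<i> / of_nat N)"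

end

theory Submission
  imports Defs "HOL-Complex_Analysis.Complex_Analysis"
begin

definition hf :: "complex \<Rightarrow> nat \<Rightarrow> complex \<Rightarrow> complex" where
  "hf tau m x = (1 - qnome tau ^ Suc m * exp (- x)) * (1 - qnome tau ^ Suc m * exp x)
            / (1 - qnome tau ^ Suc m)^2"

lemma Phi_hf: "Phi tau x = (1 - exp (-x)) * (\<Prod>m. hf tau m x)"
  unfolding Phi_def hf_def by simp

lemma norm_qnome: "norm (qnome tau) = exp (- 2 * pi * Im tau)"
  unfolding qnome_def by (simp add: norm_exp_eq_Re)

context fixes tau :: complex assumes tau: "Im tau > 0"
begin

lemma nq_lt1: "norm (qnome tau) < 1"
  using tau by (simp add: norm_qnome)

lemma q_nz: "qnome tau \<noteq> 0"
  by (simp add: qnome_def)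

lemma one_minus_qpow_nz: "1 - qnome tau ^ Suc m \<noteq> 0"
proof
  assume "1 - qnome tau ^ Suc m = 0"
  hence "norm (qnome tau ^ Suc m) = 1" by (metis eq_iff_diff_eq_0 norm_one)
  moreover have "norm (qnome tau ^ Suc m) < 1"
  proof -
    have "norm (qnome tau) ^ Suc m \<le> norm (qnome tau)" using nq_lt1 by (simp add: mult_left_le power_le_one)
    thus ?thesis using nq_lt1 by (simp add: norm_power del: power_Suc)
  qed
  ultimately show False by simp
qed

lemma hf_minus_1: "hf tau m x - 1 = qnome tau ^ Suc m * (2 - exp x - exp (-x)) / (1 - qnome tau ^ Suc m)^2"
proof -
  define r where "r = qnome tau ^ Suc m"
  have r: "1 - r \<noteq> 0" using one_minus_qpow_nz r_def by simp
  have e: "exp x * exp (-x) = 1" by (simp add: exp_minus_inverse)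
  have "(1 - r * exp (- x)) * (1 - r * exp x) - (1 - r)^2 = r * (2 - exp x - exp (-x))"
    using e by (simp add: algebra_simps power2_eq_square)
  thus ?thesis unfolding hf_def r_def[symmetric] using r
    by (simp add: field_simps)
qed

lemma hf_bound:
  assumes "norm x \<le> R"
  shows "norm (hf tau m x - 1) \<le> norm (qnome tau) ^ Suc m * (2 + 2 * exp R) / (1 - norm (qnome tau))^2"
proof -
  define r where "r = qnome tau ^ Suc m"
  have nr: "norm r \<le> norm (qnome tau)"
    unfolding r_def norm_power using nq_lt1 by (simp add: mult_left_le power_le_one)
  have d: "1 - norm (qnome tau) \<le> norm (1 - r)"
    using nr norm_triangle_ineq2[of 1 r] by simp
  have d0: "0 < 1 - norm (qnome tau)" using nq_lt1 by simp
  have n1: "norm (2 - exp x - exp (-x)) \<le> 2 + 2 * exp R"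
  proof -
    have "norm (exp x) \<le> exp R" using assms
      by (metis abs_le_D1 exp_le_cancel_iff norm_exp_eq_Re abs_Re_le_cmod order_trans)
    moreover have "norm (exp (-x)) \<le> exp R" using assms
      by (metis abs_le_D2 exp_le_cancel_iff norm_exp_eq_Re abs_Re_le_cmod order_trans minus_complex.sel(1) uminus_complex.sel(1) abs_minus_cancel)
    moreover have "norm (2 - exp x - exp (-x)) \<le> norm (2::complex) + norm (exp x) + norm (exp (-x))"
      using norm_triangle_ineq4[of "2 - exp x" "exp (-x)"] norm_triangle_ineq4[of 2 "exp x"] by simp
    moreover have "norm (2::complex) = 2" by simp
    ultimately show ?thesis by linarith
  qed
  have "norm (hf tau m x - 1) = norm r * norm (2 - exp x - exp (-x)) / norm (1 - r)^2"
    unfolding hf_minus_1 r_def by (simp add: norm_mult norm_divide norm_power)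
  also have "\<dots> \<le> norm r * (2 + 2 * exp R) / (1 - norm (qnome tau))^2"
    by (intro frac_le mult_left_mono n1 power_mono d) (use d0 in auto)
  also have "\<dots> = norm (qnome tau) ^ Suc m * (2 + 2 * exp R) / (1 - norm (qnome tau))^2"
    by (simp add: r_def norm_power norm_mult)
  finally show ?thesis .
qed

lemma summable_hf: "summable (\<lambda>m. norm (hf tau m x - 1))"
proof (rule summable_comparison_test)
  show "\<exists>N. \<forall>n\<ge>N. norm (norm (hf tau n x - 1)) \<le> norm (qnome tau) ^ Suc n * (2 + 2 * exp (norm x)) / (1 - norm (qnome tau))^2"
    using hf_bound[of x "norm x"] by auto
  show "summable (\<lambda>n. norm (qnome tau) ^ Suc n * (2 + 2 * exp (norm x)) / (1 - norm (qnome tau))^2)"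
    using nq_lt1 by (intro summable_divide summable_mult2) (simp add: summable_geometric)
qed

lemma conv_hf: "convergent_prod (\<lambda>m. hf tau m x)"
  by (intro abs_convergent_prod_imp_convergent_prod summable_imp_abs_convergent_prod summable_hf)

end

definition PP :: "complex \<Rightarrow> complex \<Rightarrow> complex" where
  "PP tau x = (\<Prod>m. hf tau m x)"

lemma Phi_PP: "Phi tau x = (1 - exp (-x)) * PP tau x"
  unfolding Phi_hf PP_def ..

context fixes tau :: complex assumes tau: "Im tau > 0"
begin

lemma PP_lim: "(\<lambda>n. \<Prod>m<n. hf tau m x) \<longlonglongrightarrow> PP tau x"
proof -
  have "(\<lambda>n. \<Prod>m\<le>n. hf tau m x) \<longlonglongrightarrow> PP tau x"
    unfolding PP_def by (rule convergent_prod_LIMSEQ[OF conv_hf[OF tau]])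
  hence "(\<lambda>n. \<Prod>m<Suc n. hf tau m x) \<longlonglongrightarrow> PP tau x"
    by (simp add: lessThan_Suc_atMost)
  thus ?thesis by (rule LIMSEQ_imp_Suc)
qed

lemma hf_cont: "continuous_on A (hf tau m)"
  unfolding hf_def by (intro continuous_intros) (use one_minus_qpow_nz[OF tau] in auto)

lemma hf_holo: "hf tau m holomorphic_on A"
  unfolding hf_def by (intro holomorphic_intros) (use one_minus_qpow_nz[OF tau] in auto)

lemma PP_unif: "uniform_limit (cball 0 R) (\<lambda>n x. \<Prod>m<n. hf tau m x) (PP tau) sequentially"
proof -
  have "uniformly_convergent_on (cball 0 R) (\<lambda>n x. \<Prod>m<n. hf tau m x)"
  proof (rule uniformly_convergent_on_prod')
    show "uniformly_convergent_on (cball 0 R) (\<lambda>N x. \<Sum>n<N. norm (hf tau n x - 1))"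
    proof (rule Weierstrass_m_test')
      fix n x assume "x \<in> cball (0::complex) R"
      hence "norm x \<le> R" by simp
      thus "norm (norm (hf tau n x - 1)) \<le> norm (qnome tau) ^ Suc n * (2 + 2 * exp R) / (1 - norm (qnome tau))^2"
        using hf_bound[OF tau] by simp
    next
      show "summable (\<lambda>n. norm (qnome tau) ^ Suc n * (2 + 2 * exp R) / (1 - norm (qnome tau))^2)"
        using nq_lt1[OF tau] by (intro summable_divide summable_mult2) (simp add: summable_geometric)
    qed
  next
    show "\<And>n. continuous_on (cball 0 R) (hf tau n)" by (rule hf_cont)
  next
    show "compact (cball (0::complex) R)" by simp
  qed
  then obtain g where g: "uniform_limit (cball 0 R) (\<lambda>n x. \<Prod>m<n. hf tau m x) g sequentially"
    unfolding uniformly_convergent_on_def by blast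
  also have "?this \<longleftrightarrow> uniform_limit (cball 0 R) (\<lambda>n x. \<Prod>m<n. hf tau m x) (PP tau) sequentially"
  proof (intro uniform_limit_cong)
    fix z :: complex assume z: "z \<in> cball 0 R"
    have "(\<lambda>n. \<Prod>m<n. hf tau m z) \<longlonglongrightarrow> g z"
      using g z by (rule tendsto_uniform_limitI)
    thus "g z = PP tau z" by (rule LIMSEQ_unique[OF _ PP_lim])
  qed auto
  finally show ?thesis .
qed

lemma PP_holo: "PP tau holomorphic_on A"
proof (rule holomorphic_on_subset)
  show "PP tau holomorphic_on UNIV"
  proof (rule holomorphic_uniform_sequence)
    fix z :: complex
    have *: "uniform_limit (cball 0 (norm z + 1)) (\<lambda>n x. \<Prod>m<n. hf tau m x) (PP tau) sequentially"
      by (rule PP_unif)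
    hence "uniform_limit (cball z 1) (\<lambda>n x. \<Prod>m<n. hf tau m x) (PP tau) sequentially"
      by (rule uniform_limit_on_subset) (simp add: cball_subset_cball_iff)
    thus "\<exists>d>0. cball z d \<subseteq> UNIV \<and> uniform_limit (cball z d) (\<lambda>n x. \<Prod>m<n. hf tau m x) (PP tau) sequentially"
      by (intro exI[of _ 1]) auto
  next
    show "\<And>n. (\<lambda>x. \<Prod>m<n. hf tau m x) holomorphic_on UNIV" by (intro holomorphic_on_prod hf_holo)
  qed simp
qed auto

lemma Phi_holo: "Phi tau holomorphic_on A"
proof -
  have "(\<lambda>x. (1 - exp (-x)) * PP tau x) holomorphic_on A"
    by (intro holomorphic_intros PP_holo)
  thus ?thesis by (simp add: Phi_PP[abs_def])
qed

lemma Phi_cont: "continuous_on A (Phi tau)"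
  using Phi_holo holomorphic_on_imp_continuous_on by blast

lemma PP_0: "PP tau 0 = 1"
proof -
  have "hf tau m 0 = 1" for m
    unfolding hf_def using one_minus_qpow_nz[OF tau, of m] by (simp add: power2_eq_square)
  thus ?thesis unfolding PP_def by simp
qed

lemma PP_nz: assumes "\<And>m. hf tau m x \<noteq> 0" shows "PP tau x \<noteq> 0"
  unfolding PP_def by (rule prodinf_nonzero[OF conv_hf[OF tau] assms])

lemma Phi_lim: "(\<lambda>n. (1 - exp (-x)) * (\<Prod>m<n. hf tau m x)) \<longlonglongrightarrow> Phi tau x"
  unfolding Phi_PP by (intro tendsto_mult tendsto_const PP_lim)

end

lemma exp_eq_1_int: "exp z = 1 \<Longrightarrow> \<exists>j::int. z = 2 * pi * \<i> * of_int j"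
proof -
  assume "exp z = 1"
  hence "exp z = exp 0" by simp
  then obtain n :: int where "z = 0 + (of_int (2 * n) * pi) * \<i>" unfolding exp_eq by blast
  thus ?thesis by (intro exI[of _ n]) simp
qed

lemma exp_2pii_int [simp]: "exp (2 * pi * \<i> * of_int j) = 1"
  by (simp add: exp_eq_1)

lemma mem_lattice: "w \<in> lattice tau \<longleftrightarrow> (\<exists>m n :: int. w = 2 * pi * \<i> * (of_int m * tau + of_int n))"
  unfolding lattice_def by blast

lemma lattice_0 [simp]: "0 \<in> lattice tau"
  unfolding mem_lattice by (intro exI[of _ 0]) simp

lemma lattice_add: "a \<in> lattice tau \<Longrightarrow> b \<in> lattice tau \<Longrightarrow> a + b \<in> lattice tau"
proof -
  assume "a \<in> lattice tau" "b \<in> lattice tau"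
  then obtain m n m' n' :: int where "a = 2 * pi * \<i> * (of_int m * tau + of_int n)"
     "b = 2 * pi * \<i> * (of_int m' * tau + of_int n')" unfolding mem_lattice by blast
  thus ?thesis unfolding mem_lattice
    by (intro exI[of _ "m + m'"] exI[of _ "n + n'"]) (simp add: algebra_simps)
qed

lemma lattice_uminus: "a \<in> lattice tau \<Longrightarrow> - a \<in> lattice tau"
proof -
  assume "a \<in> lattice tau"
  then obtain m n :: int where "a = 2 * pi * \<i> * (of_int m * tau + of_int n)"
     unfolding mem_lattice by blast
  thus ?thesis unfolding mem_lattice
    by (intro exI[of _ "- m"] exI[of _ "- n"]) (simp add: algebra_simps)
qed

lemma lattice_diff: "a \<in> lattice tau \<Longrightarrow> b \<in> lattice tau \<Longrightarrow> a - b \<in> lattice tau"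
  using lattice_add[of a tau "- b"] lattice_uminus[of b tau] by simp

lemma lattice_T [simp]: "2 * pi * \<i> * tau \<in> lattice tau"
  unfolding mem_lattice by (intro exI[of _ 1] exI[of _ 0]) simp

lemma lattice_P [simp]: "2 * pi * \<i> \<in> lattice tau"
  unfolding mem_lattice by (intro exI[of _ 0] exI[of _ 1]) simp

lemma Phi_periodic: "Phi tau (x + 2 * pi * \<i>) = Phi tau x"
proof -
  have e1: "exp (x + 2 * pi * \<i>) = exp x" by (simp add: exp_add)
  have e2: "exp (- (x + 2 * pi * \<i>)) = exp (- x)" 
    by (simp add: exp_add exp_diff)
  show ?thesis unfolding Phi_def e1 e2 ..
qed

lemma qnome_exp: "exp (2 * pi * \<i> * tau) = qnome tau"
  by (simp add: qnome_def)

context fixes tau :: complex assumes tau: "Im tau > 0"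
begin

lemma E_shift:
  fixes x :: complex
  defines "q \<equiv> qnome tau"
  defines "E \<equiv> \<lambda>n y. (1 - exp (-y)) * (\<Prod>m<n. hf tau m y)"
  shows "E n (x + 2 * pi * \<i> * tau) * (1 - q ^ n * exp (-x)) * (1 - q * exp x)
         = (1 - exp (-x) / q) * E n x * (1 - q ^ Suc n * exp x)"
proof (induction n)
  case 0
  have "exp (- (x + 2 * pi * \<i> * tau)) = exp (-x) / q"
    by (simp add: q_def qnome_def exp_diff exp_minus field_simps)
  thus ?case unfolding E_def by simp
next
  case (Suc n)
  have e1: "exp (- (x + 2 * pi * \<i> * tau)) = exp (-x) / q"
    by (simp add: q_def qnome_def exp_diff exp_minus field_simps)
  have e2: "exp (x + 2 * pi * \<i> * tau) = q * exp x"
    by (simp add: q_def qnome_def exp_add)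
  have qnz: "q \<noteq> 0" by (simp add: q_def qnome_def)
  define C where "C = (1 - q ^ Suc n)^2"
  have hs: "hf tau n (x + 2 * pi * \<i> * tau) = (1 - q ^ n * exp (-x)) * (1 - q ^ Suc (Suc n) * exp x) / C"
    unfolding hf_def e1 e2 C_def q_def[symmetric] using qnz by (simp add: field_simps)
  have h: "hf tau n x = (1 - q ^ Suc n * exp (-x)) * (1 - q ^ Suc n * exp x) / C"
    unfolding hf_def C_def q_def ..
  have Es: "E (Suc n) y = E n y * hf tau n y" for y
    unfolding E_def by (simp add: mult.assoc)
  have "E (Suc n) (x + 2 * pi * \<i> * tau) * (1 - q ^ Suc n * exp (-x)) * (1 - q * exp x)
       = (E n (x + 2 * pi * \<i> * tau) * (1 - q ^ n * exp (-x)) * (1 - q * exp x))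
          * ((1 - q ^ Suc (Suc n) * exp x) * (1 - q ^ Suc n * exp (-x)) / C)"
    unfolding Es hs by (simp add: field_simps)
  also have "\<dots> = (1 - exp (-x) / q) * E n x * (1 - q ^ Suc n * exp x)
          * ((1 - q ^ Suc (Suc n) * exp x) * (1 - q ^ Suc n * exp (-x)) / C)"
    unfolding Suc ..
  also have "\<dots> = (1 - exp (-x) / q) * E (Suc n) x * (1 - q ^ Suc (Suc n) * exp x)"
    unfolding Es h by (simp add: field_simps)
  finally show ?case .
qed

lemma Phi_shift_aux:
  "Phi tau (x + 2 * pi * \<i> * tau) * (1 - qnome tau * exp x)
     = (1 - exp (-x) / qnome tau) * Phi tau x"
proof -
  define q where "q = qnome tau"
  have q0: "(\<lambda>n. q ^ n) \<longlonglongrightarrow> 0"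
    unfolding q_def by (rule LIMSEQ_power_zero) (use nq_lt1[OF tau] in simp)
  have l1: "(\<lambda>n. (1 - exp (- (x + 2 * pi * \<i> * tau))) * (\<Prod>m<n. hf tau m (x + 2 * pi * \<i> * tau))
           * (1 - q ^ n * exp (-x)) * (1 - q * exp x))
        \<longlonglongrightarrow> Phi tau (x + 2 * pi * \<i> * tau) * (1 - 0 * exp (-x)) * (1 - q * exp x)"
    by (intro tendsto_intros Phi_lim[OF tau] q0)
  have q1: "(\<lambda>n. q ^ Suc n) \<longlonglongrightarrow> 0" using LIMSEQ_Suc[OF q0] .
  have l2: "(\<lambda>n. (1 - exp (-x) / q) * ((1 - exp (-x)) * (\<Prod>m<n. hf tau m x)) * (1 - q ^ Suc n * exp x))
        \<longlonglongrightarrow> (1 - exp (-x) / q) * Phi tau x * (1 - 0 * exp x)"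
    by (intro tendsto_intros Phi_lim[OF tau] q1)
  have l2': "(\<lambda>n. (1 - exp (- (x + 2 * pi * \<i> * tau))) * (\<Prod>m<n. hf tau m (x + 2 * pi * \<i> * tau))
           * (1 - q ^ n * exp (-x)) * (1 - q * exp x))
        \<longlonglongrightarrow> (1 - exp (-x) / q) * Phi tau x * (1 - 0 * exp x)"
    using l2 unfolding q_def E_shift[where x=x, symmetric] .
  have "Phi tau (x + 2 * pi * \<i> * tau) * (1 - 0 * exp (-x)) * (1 - q * exp x) = 
        (1 - exp (-x) / q) * Phi tau x * (1 - 0 * exp x)"
    by (rule LIMSEQ_unique[OF l1 l2'])
  thus ?thesis by (simp add: q_def)
qed

end

lemma periodic_int:
  fixes F :: "complex \<Rightarrow> complex"
  assumes "\<And>w. F (w + P) = F w"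
  shows "F (w + of_int n * P) = F w"
proof -
  have pos: "F (w + of_nat k * P) = F w" for k w
  proof (induction k arbitrary: w)
    case (Suc k)
    have "F (w + of_nat (Suc k) * P) = F ((w + of_nat k * P) + P)" by (simp add: algebra_simps)
    also have "\<dots> = F (w + of_nat k * P)" by (rule assms)
    finally show ?case using Suc by simp
  qed simp
  show ?thesis
  proof (cases "n \<ge> 0")
    case True
    then obtain k where "n = int k" using nonneg_int_cases by blast
    thus ?thesis using pos by simp
  next
    case False
    define k where "k = nat (- n)"
    have k: "n = - int k" using False by (simp add: k_def)
    have "F w = F ((w + of_int n * P) + of_nat k * P)" by (simp add: k)
    also have "\<dots> = F (w + of_int n * P)" by (rule pos)
    finally show ?thesis ..
  qed
qed

lemma quasi_periodic_int:
  fixes F :: "complex \<Rightarrow> complex"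
  assumes "\<And>w. F (w + T) = c * F w" "c \<noteq> 0"
  shows "F (w + of_int n * T) = c powi n * F w"
proof -
  have pos: "F (w + of_nat k * T) = c ^ k * F w" for k w
  proof (induction k arbitrary: w)
    case (Suc k)
    have "F (w + of_nat (Suc k) * T) = F ((w + of_nat k * T) + T)" by (simp add: algebra_simps)
    also have "\<dots> = c * F (w + of_nat k * T)" by (rule assms)
    finally show ?case using Suc by simp
  qed simp
  show ?thesis
  proof (cases "n \<ge> 0")
    case True
    then obtain k where "n = int k" using nonneg_int_cases by blast
    thus ?thesis using pos by (simp add: power_int_def)
  next
    case False
    define k where "k = nat (- n)"
    have k: "n = - int k" using False by (simp add: k_def)
    have "F w = F ((w + of_int n * T) + of_nat k * T)" by (simp add: k)
    also have "\<dots> = c ^ k * F (w + of_int n * T)" by (rule pos)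
    finally have "F (w + of_int n * T) = F w / c ^ k" using assms(2) by (simp add: field_simps)
    thus ?thesis using assms(2) by (simp add: k power_int_minus field_simps)
  qed
qed

lemma exp_T_pow: "exp (of_nat k * (2 * pi * \<i> * tau)) = qnome tau ^ k"
  by (simp add: exp_of_nat_mult qnome_def)

context fixes tau :: complex assumes tau: "Im tau > 0"
begin

lemma PP_zero: assumes "hf tau k w = 0" shows "PP tau w = 0"
proof -
  have ev: "eventually (\<lambda>n. (\<Prod>m<n. hf tau m w) = 0) sequentially"
    using eventually_ge_at_top[of "Suc k"]
    by eventually_elim (use assms in \<open>auto intro!: prod_zero\<close>)
  have "(\<lambda>n. \<Prod>m<n. hf tau m w) \<longlonglongrightarrow> 0"
    by (rule tendsto_eventually[OF ev])
  thus ?thesis using PP_lim[OF tau] LIMSEQ_unique by blast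
qed

lemma Phi_zero_lattice: assumes "w \<in> lattice tau" shows "Phi tau w = 0"
proof -
  obtain m n :: int where w: "w = 2 * pi * \<i> * (of_int m * tau + of_int n)"
    using assms unfolding mem_lattice by blast
  define q where "q = qnome tau"
  have qnz: "q \<noteq> 0" by (simp add: q_def qnome_def)
  show ?thesis
  proof (cases "m = 0")
    case True
    have "exp (-w) = 1" unfolding w True using exp_2pii_int[of "- n"] by (simp add: algebra_simps)
    thus ?thesis unfolding Phi_def by simp
  next
    case False
    show ?thesis
    proof (cases "m > 0")
      case True
      define k where "k = nat m - 1"
      have k: "m = int (Suc k)" using True by (simp add: k_def)
      have "exp (-w) = exp (- (of_nat (Suc k) * (2 * pi * \<i> * tau))) * exp (2 * pi * \<i> * of_int (- n))"
        unfolding w k by (simp add: exp_add[symmetric] algebra_simps)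
      also have "\<dots> = 1 / q ^ Suc k" unfolding exp_minus exp_T_pow exp_2pii_int q_def
        by (simp add: field_simps)
      finally have "hf tau k w = 0" unfolding hf_def q_def[symmetric] using qnz by simp
      thus ?thesis unfolding Phi_PP PP_zero[OF \<open>hf tau k w = 0\<close>] by simp
    next
      case False
      define k where "k = nat (- m) - 1"
      have k: "m = - int (Suc k)" using False \<open>m \<noteq> 0\<close> by (simp add: k_def)
      have "w = - (of_nat (Suc k) * (2 * pi * \<i> * tau)) + 2 * pi * \<i> * of_int n"
        unfolding w k by (simp add: algebra_simps)
      hence "exp w = exp (- (of_nat (Suc k) * (2 * pi * \<i> * tau))) * exp (2 * pi * \<i> * of_int n)"
        by (simp only: exp_add)
      also have "\<dots> = 1 / q ^ Suc k" unfolding exp_minus exp_T_pow exp_2pii_int q_def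
        by (simp add: field_simps)
      finally have "hf tau k w = 0" unfolding hf_def q_def[symmetric] using qnz by simp
      thus ?thesis unfolding Phi_PP PP_zero[OF \<open>hf tau k w = 0\<close>] by simp
    qed
  qed
qed

lemma Phi_zero_imp_lattice: assumes "Phi tau w = 0" shows "w \<in> lattice tau"
proof (cases "exp (-w) = 1")
  case True
  then obtain j :: int where j: "- w = 2 * pi * \<i> * of_int j" using exp_eq_1_int by blast
  have "w = - (- w)" by simp
  also have "\<dots> = - (2 * pi * \<i> * of_int j)" unfolding j ..
  finally have "w = - (2 * pi * \<i> * of_int j)" .
  hence "w = 2 * pi * \<i> * (of_int (0::int) * tau + of_int (- j))" by simp
  thus ?thesis unfolding mem_lattice by blast
next
  case False
  hence "PP tau w = 0" using assms unfolding Phi_PP by simp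
  then obtain k where "hf tau k w = 0" using PP_nz[OF tau] by blast
  hence "1 - qnome tau ^ Suc k * exp (- w) = 0 \<or> 1 - qnome tau ^ Suc k * exp w = 0"
    unfolding hf_def using one_minus_qpow_nz[OF tau, of k] q_nz[OF tau] by simp
  thus ?thesis
  proof
    assume "1 - qnome tau ^ Suc k * exp (- w) = 0"
    hence "exp (of_nat (Suc k) * (2 * pi * \<i> * tau) - w) = 1"
      unfolding exp_diff exp_T_pow exp_minus using q_nz[OF tau] by (simp add: field_simps)
    then obtain j :: int where "of_nat (Suc k) * (2 * pi * \<i> * tau) - w = 2 * pi * \<i> * of_int j"
      using exp_eq_1_int by blast
    hence "w = 2 * pi * \<i> * (of_int (int (Suc k)) * tau + of_int (- j))" by (simp add: algebra_simps)
    thus ?thesis unfolding mem_lattice by blast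
  next
    assume "1 - qnome tau ^ Suc k * exp w = 0"
    hence "exp (of_nat (Suc k) * (2 * pi * \<i> * tau) + w) = 1"
      unfolding exp_add exp_T_pow by (simp add: field_simps)
    then obtain j :: int where "of_nat (Suc k) * (2 * pi * \<i> * tau) + w = 2 * pi * \<i> * of_int j"
      using exp_eq_1_int by blast
    hence "w = 2 * pi * \<i> * (of_int (- int (Suc k)) * tau + of_int j)" by (simp add: algebra_simps)
    thus ?thesis unfolding mem_lattice by blast
  qed
qed

lemma Phi_zero_iff: "Phi tau w = 0 \<longleftrightarrow> w \<in> lattice tau"
  using Phi_zero_lattice Phi_zero_imp_lattice by blast

lemma Phi_shift: "Phi tau (x + 2 * pi * \<i> * tau) = - (exp (-x) / qnome tau) * Phi tau x"
proof (cases "1 - qnome tau * exp x = 0")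
  case True
  have "exp (x + 2 * pi * \<i> * tau) = qnome tau * exp x" by (simp add: exp_add qnome_def mult.commute)
  hence "exp (x + 2 * pi * \<i> * tau) = 1" using True by simp
  then obtain j :: int where j: "x + 2 * pi * \<i> * tau = 2 * pi * \<i> * of_int j" using exp_eq_1_int by blast
  have l1: "x + 2 * pi * \<i> * tau \<in> lattice tau" unfolding j mem_lattice
    by (intro exI[of _ 0] exI[of _ j]) simp
  have l2: "x \<in> lattice tau" using lattice_diff[OF l1 lattice_T] by simp
  show ?thesis using Phi_zero_lattice[OF l1] Phi_zero_lattice[OF l2] by simp
next
  case False
  have qnz: "qnome tau \<noteq> 0" by (simp add: qnome_def)
  have e: "exp (-x) * exp x = 1" by (simp add: exp_minus)
  have "1 - exp (-x) / qnome tau = - (exp (-x) / qnome tau) * (1 - qnome tau * exp x)"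
    using qnz e by (simp add: field_simps)
  note eq = this
  have "Phi tau (x + 2 * pi * \<i> * tau) * (1 - qnome tau * exp x) = (1 - exp (-x) / qnome tau) * Phi tau x"
    by (rule Phi_shift_aux[OF tau])
  also have "\<dots> = (- (exp (-x) / qnome tau) * Phi tau x) * (1 - qnome tau * exp x)"
    unfolding eq by (simp only: mult_ac)
  finally have "Phi tau (x + 2 * pi * \<i> * tau) * (1 - qnome tau * exp x) = (- (exp (-x) / qnome tau) * Phi tau x) * (1 - qnome tau * exp x)" .
  thus ?thesis unfolding mult_right_cancel[OF False] .
qed

end

definition gf :: "nat \<Rightarrow> complex \<Rightarrow> complex \<Rightarrow> complex" where
  "gf N tau w = Phi tau (w - 2 * pi * \<i> / of_nat N) / (Phi tau w * Phi tau (- 2 * pi * \<i> / of_nat N))"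

lemma inv_ellf: "1 / ellf N tau w = gf N tau w"
  unfolding ellf_def gf_def by simp

lemma quasi_periodic_int_exp:
  fixes F :: "complex \<Rightarrow> complex"
  assumes "\<And>w. F (w + T) = exp b * F w"
  shows "F (w + of_int n * T) = exp (of_int n * b) * F w"
proof -
  have pos: "F (w + of_nat k * T) = exp (of_nat k * b) * F w" for k w
  proof (induction k arbitrary: w)
    case (Suc k)
    have "F (w + of_nat (Suc k) * T) = F ((w + of_nat k * T) + T)" by (simp add: algebra_simps)
    also have "\<dots> = exp b * F (w + of_nat k * T)" by (rule assms)
    also have "\<dots> = exp b * exp (of_nat k * b) * F w" using Suc by simp
    also have "exp b * exp (of_nat k * b) = exp (of_nat (Suc k) * b)"
      by (simp add: exp_add[symmetric] algebra_simps)
    finally show ?case .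
  qed simp
  show ?thesis
  proof (cases "n \<ge> 0")
    case True
    then obtain k where "n = int k" using nonneg_int_cases by blast
    thus ?thesis using pos by simp
  next
    case False
    define k where "k = nat (- n)"
    have k: "n = - int k" using False by (simp add: k_def)
    have "F w = F ((w + of_int n * T) + of_nat k * T)" by (simp add: k)
    also have "\<dots> = exp (of_nat k * b) * F (w + of_int n * T)" by (rule pos)
    finally have "F (w + of_int n * T) = exp (- (of_nat k * b)) * F w"
      by (simp add: exp_minus field_simps)
    thus ?thesis by (simp add: k)
  qed
qed

context fixes tau :: complex and N :: nat assumes tau: "Im tau > 0" and N: "N \<ge> 2"
begin

lemma na_notin: "- 2 * pi * \<i> / of_nat N \<notin> lattice tau"
proof
  assume "- 2 * pi * \<i> / of_nat N \<in> lattice tau"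
  then obtain m n :: int where mn: "- 2 * pi * \<i> / of_nat N = 2 * pi * \<i> * (of_int m * tau + of_int n)"
    unfolding mem_lattice by blast
  have Npos: "(of_nat N :: complex) \<noteq> 0" using N by simp
  have "2 * pi * \<i> * (- 1 / of_nat N) = (- 2 * pi * \<i> / of_nat N :: complex)" by simp
  also note mn
  finally have "- 1 / of_nat N = of_int m * tau + of_int n" by (subst (asm) mult_left_cancel) simp_all
  hence e: "- 1 / of_nat N = of_int m * tau + of_int n" .
  have "Im (- 1 / of_nat N) = Im (of_int m * tau + of_int n)" using e by simp
  hence "of_int m * Im tau = 0" by simp
  hence m0: "m = 0" using tau by simp
  have "Re (- 1 / of_nat N) = Re (of_int m * tau + of_int n)" using e by simp
  hence "- 1 / real N = of_int n" using m0 by simp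
  moreover have "- 1 < - 1 / real N" "- 1 / real N < 0" using N by (simp_all add: field_simps)
  ultimately show False by (metis of_int_0 of_int_less_iff of_int_minus of_int_1 int_one_le_iff_zero_less 
       not_less zless_imp_add1_zle add.commute add.right_neutral diff_add_cancel minus_add_cancel)
qed

lemma Phi_na_nz: "Phi tau (- 2 * pi * \<i> / of_nat N) \<noteq> 0"
  using na_notin Phi_zero_iff[OF tau] by blast

lemma gf_periodic: "gf N tau (w + 2 * pi * \<i>) = gf N tau w"
proof -
  have "Phi tau (w + 2 * pi * \<i> - 2 * pi * \<i> / of_nat N) = Phi tau (w - 2 * pi * \<i> / of_nat N)"
    using Phi_periodic[of tau "w - 2 * pi * \<i> / of_nat N"] by (simp add: algebra_simps)
  thus ?thesis unfolding gf_def Phi_periodic by simp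
qed

lemma gf_shift: "gf N tau (w + 2 * pi * \<i> * tau) = exp (2 * pi * \<i> / of_nat N) * gf N tau w"
proof -
  define a where "a = 2 * pi * \<i> / of_nat N"
  have na: "- 2 * pi * \<i> / of_nat N = - a" by (simp add: a_def)
  have 1: "Phi tau (w + 2 * pi * \<i> * tau - a) = - (exp (- (w - a)) / qnome tau) * Phi tau (w - a)"
    using Phi_shift[OF tau, of "w - a"] by (simp add: algebra_simps)
  have 2: "Phi tau (w + 2 * pi * \<i> * tau) = - (exp (- w) / qnome tau) * Phi tau w"
    by (rule Phi_shift[OF tau])
  have qnz: "qnome tau \<noteq> 0" by (simp add: qnome_def)
  have e: "exp (- (w - a)) = exp (- w) * exp a" by (simp add: exp_add[symmetric])
  show ?thesis unfolding gf_def a_def[symmetric] na 1 2 e using qnz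
    by (cases "Phi tau w = 0") (simp_all add: field_simps)
qed

lemma gf_lattice: "gf N tau (w + 2 * pi * \<i> * (of_int m * tau + of_int n))
      = exp (of_int m * (2 * pi * \<i> / of_nat N)) * gf N tau w"
proof -
  have e: "w + 2 * pi * \<i> * (of_int m * tau + of_int n) = (w + of_int n * (2 * pi * \<i>)) + of_int m * (2 * pi * \<i> * tau)"
    by (simp add: algebra_simps)
  have "gf N tau (w + 2 * pi * \<i> * (of_int m * tau + of_int n))
      = gf N tau ((w + of_int n * (2 * pi * \<i>)) + of_int m * (2 * pi * \<i> * tau))"
    by (simp only: e)
  also have "\<dots> = exp (of_int m * (2 * pi * \<i> / of_nat N)) * gf N tau (w + of_int n * (2 * pi * \<i>))"
    by (rule quasi_periodic_int_exp[of "gf N tau", OF gf_shift])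
  also have "gf N tau (w + of_int n * (2 * pi * \<i>)) = gf N tau w"
    by (rule periodic_int) (rule gf_periodic)
  finally show ?thesis .
qed

lemma gf_lattice': "l \<in> lattice tau \<Longrightarrow> \<exists>m::int. \<forall>w. gf N tau (w + l) = exp (of_int m * (2 * pi * \<i> / of_nat N)) * gf N tau w"
  unfolding mem_lattice using gf_lattice by blast

lemma Phi_field_diff: "Phi tau field_differentiable at w"
  using Phi_holo[OF tau, of UNIV] holomorphic_on_imp_differentiable_at by blast

lemma gf_field_diff: assumes "w \<notin> lattice tau" shows "gf N tau field_differentiable at w"
proof -
  have "Phi tau w \<noteq> 0" using assms Phi_zero_iff[OF tau] by blast
  have "(Phi tau \<circ> (\<lambda>z. z - 2 * pi * \<i> / of_nat N)) field_differentiable at w"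
    by (rule field_differentiable_compose)
       (auto intro!: field_differentiable_diff field_differentiable_ident field_differentiable_const Phi_field_diff)
  hence d1: "(\<lambda>z. Phi tau (z - 2 * pi * \<i> / of_nat N)) field_differentiable at w" by (simp add: o_def)
  have "(\<lambda>w. Phi tau (w - 2 * pi * \<i> / of_nat N) / (Phi tau w * Phi tau (- 2 * pi * \<i> / of_nat N)))
          field_differentiable at w"
    using Phi_na_nz \<open>Phi tau w \<noteq> 0\<close>
    by (intro field_differentiable_divide field_differentiable_mult d1 Phi_field_diff field_differentiable_const) auto
  thus ?thesis unfolding gf_def[abs_def] .
qed

lemma Phi_over_u: "((\<lambda>u. Phi tau u / u) \<longlongrightarrow> 1) (at 0)"
proof -
  have d: "((\<lambda>u. 1 - exp (- u)) has_field_derivative 1) (at 0)"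
    by (auto intro!: derivative_eq_intros)
  hence l1: "((\<lambda>u::complex. (1 - exp (- u)) / u) \<longlongrightarrow> 1) (at 0)"
    unfolding has_field_derivative_iff by simp
  have "isCont (PP tau) 0"
    using PP_holo[OF tau, of UNIV] holomorphic_on_imp_continuous_on continuous_on_eq_continuous_at by blast
  hence l2: "(PP tau \<longlongrightarrow> 1) (at 0)" using PP_0[OF tau] by (simp add: isCont_def)
  have "((\<lambda>u. (1 - exp (- u)) / u * PP tau u) \<longlongrightarrow> 1 * 1) (at 0)"
    by (rule tendsto_mult[OF l1 l2])
  thus ?thesis unfolding Phi_PP by simp
qed

lemma u_gf: "((\<lambda>u. u * gf N tau u) \<longlongrightarrow> 1) (at 0)"
proof -
  define c where "c = Phi tau (- 2 * pi * \<i> / of_nat N)"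
  have c: "c \<noteq> 0" using Phi_na_nz c_def by simp
  have "isCont (\<lambda>u. Phi tau (u - 2 * pi * \<i> / of_nat N)) 0"
    by (intro continuous_intros isCont_o2[OF _ field_differentiable_imp_continuous_at[OF Phi_field_diff]])
  hence l1: "((\<lambda>u. Phi tau (u - 2 * pi * \<i> / of_nat N)) \<longlongrightarrow> c) (at 0)"
    by (simp add: isCont_def c_def)
  have "((\<lambda>u. (Phi tau (u - 2 * pi * \<i> / of_nat N) / c) / (Phi tau u / u)) \<longlongrightarrow> (c / c) / 1) (at 0)"
    by (intro tendsto_divide l1 Phi_over_u tendsto_const) (use c in simp_all)
  hence l: "((\<lambda>u. (Phi tau (u - 2 * pi * \<i> / of_nat N) / c) / (Phi tau u / u)) \<longlongrightarrow> 1) (at 0)"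
    using c by simp
  show ?thesis
  proof (rule Lim_transform_eventually[OF l])
    show "\<forall>\<^sub>F u in at 0. Phi tau (u - 2 * pi * \<i> / of_nat N) / c / (Phi tau u / u) = u * gf N tau u"
      unfolding gf_def c_def[symmetric] eventually_at_filter
      by (rule always_eventually) (simp add: field_simps)
  qed
qed

end

definition FF :: "nat \<Rightarrow> complex \<Rightarrow> nat \<Rightarrow> (nat \<Rightarrow> complex) \<Rightarrow> complex \<Rightarrow> complex" where
  "FF N tau q' x z = (\<Prod>i<q'. gf N tau (x i - z))"

definition cc :: "nat \<Rightarrow> complex \<Rightarrow> nat \<Rightarrow> (nat \<Rightarrow> complex) \<Rightarrow> nat \<Rightarrow> complex" where
  "cc N tau q' x i = (\<Prod>j\<in>{..<q'} - {i}. gf N tau (x j - x i))"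

definition DD :: "nat \<Rightarrow> complex \<Rightarrow> nat \<Rightarrow> (nat \<Rightarrow> complex) \<Rightarrow> complex \<Rightarrow> complex" where
  "DD N tau q' x z = FF N tau q' x z - (\<Sum>i<q'. cc N tau q' x i * gf N tau (x i - z))"

definition Pol :: "complex \<Rightarrow> nat \<Rightarrow> (nat \<Rightarrow> complex) \<Rightarrow> complex set" where
  "Pol tau q' x = {z. \<exists>i<q'. x i - z \<in> lattice tau}"

lemma shift_filterlim: "filterlim (\<lambda>z. z + l) (at (p + l)) (at (p :: complex))"
proof (rule filterlim_atI)
  show "((\<lambda>z. z + l) \<longlongrightarrow> p + l) (at p)" by (intro tendsto_intros)
  show "\<forall>\<^sub>F z in at p. z + l \<noteq> p + l" by (simp add: eventually_at_filter)
qed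

lemma neg_filterlim: "filterlim (\<lambda>z. c - z) (at 0) (at (c :: complex))"
proof (rule filterlim_atI)
  show "((\<lambda>z. c - z) \<longlongrightarrow> 0) (at c)"
    using tendsto_diff[OF tendsto_const[of c] tendsto_ident_at[of c UNIV]] by simp
  show "\<forall>\<^sub>F z in at c. c - z \<noteq> 0" by (simp add: eventually_at_filter)
qed

lemma nhds_to_at: "eventually Q (nhds b) \<Longrightarrow> eventually Q (at b within s)"
  unfolding eventually_at_filter by (erule eventually_mono) auto

definition DDt :: "nat \<Rightarrow> complex \<Rightarrow> nat \<Rightarrow> (nat \<Rightarrow> complex) \<Rightarrow> complex \<Rightarrow> complex" where
  "DDt N tau q' x z = (if z \<in> Pol tau q' x then Lim (at z) (DD N tau q' x) else DD N tau q' x z)"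

context
  fixes N q' :: nat and tau :: complex and x :: "nat \<Rightarrow> complex"
  assumes N: "N \<ge> 2" and tau: "Im tau > 0"
    and qmod: "q' mod N = 1 mod N"
    and xL: "\<And>i. i < q' \<Longrightarrow> x i \<notin> lattice tau"
    and xd: "\<And>i j. i < q' \<Longrightarrow> j < q' \<Longrightarrow> i \<noteq> j \<Longrightarrow> x i - x j \<notin> lattice tau"
begin

abbreviation "ag \<equiv> 2 * pi * \<i> / (of_nat N :: complex)"
abbreviation "gg \<equiv> gf N tau"
abbreviation "Dg \<equiv> DD N tau q' x"
abbreviation "Pg \<equiv> Pol tau q' x"
abbreviation "Dtg \<equiv> DDt N tau q' x"

lemma om: "exp (of_int m * ag) ^ q' = exp (of_int m * ag)"
proof -
  have "q' mod N = 1" using qmod N by simp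
  hence q: "q' = N * (q' div N) + 1" by (metis div_mult_mod_eq mult.commute)
  define k where "k = q' div N"
  have Nnz: "(of_nat N :: complex) \<noteq> 0" using N by simp
  have "of_nat q' * (of_int m * ag) = 2 * pi * \<i> * of_int (m * int k) + of_int m * ag"
    using Nnz by (subst q) (simp add: k_def field_simps)
  hence "exp (of_nat q' * (of_int m * ag)) = exp (2 * pi * \<i> * of_int (m * int k)) * exp (of_int m * ag)"
    by (simp only: exp_add)
  hence "exp (of_nat q' * (of_int m * ag)) = exp (of_int m * ag)"
    by (simp only: exp_2pii_int mult_1)
  thus ?thesis unfolding exp_of_nat_mult .
qed

lemma norm_om: "norm (exp (of_int m * ag)) = 1"
  by (simp add: norm_exp_eq_Re)

lemma DD_lattice: "Dg (z + 2 * pi * \<i> * (of_int m * tau + of_int n)) = exp (of_int (- m) * ag) * Dg z"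
proof -
  define e where "e = exp (of_int (- m) * ag)"
  have gx: "gg (x i - (z + 2 * pi * \<i> * (of_int m * tau + of_int n))) = e * gg (x i - z)" for i
  proof -
    have "x i - (z + 2 * pi * \<i> * (of_int m * tau + of_int n)) = (x i - z) + 2 * pi * \<i> * (of_int (- m) * tau + of_int (- n))"
      by (simp add: algebra_simps)
    thus ?thesis unfolding e_def by (simp only: gf_lattice[OF tau N])
  qed
  have "FF N tau q' x (z + 2 * pi * \<i> * (of_int m * tau + of_int n)) = e ^ q' * FF N tau q' x z"
    unfolding FF_def gx by (simp add: prod.distrib)
  also have "e ^ q' = e" unfolding e_def by (rule om)
  finally have FFs: "FF N tau q' x (z + 2 * pi * \<i> * (of_int m * tau + of_int n)) = e * FF N tau q' x z" .
  have Ss: "(\<Sum>i<q'. cc N tau q' x i * gg (x i - (z + 2 * pi * \<i> * (of_int m * tau + of_int n))))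
      = e * (\<Sum>i<q'. cc N tau q' x i * gg (x i - z))"
    unfolding gx by (simp add: sum_distrib_left mult_ac)
  show ?thesis unfolding DD_def FFs Ss e_def[symmetric] by (simp add: algebra_simps)
qed

lemma DD_lattice': "l \<in> lattice tau \<Longrightarrow> \<exists>m::int. \<forall>z. Dg (z + l) = exp (of_int m * ag) * Dg z"
proof -
  assume "l \<in> lattice tau"
  then obtain m n :: int where "l = 2 * pi * \<i> * (of_int m * tau + of_int n)" unfolding mem_lattice by blast
  thus ?thesis using DD_lattice[of _ m n] by (intro exI[of _ "- m"]) simp
qed

lemma Pol_iff: "z \<in> Pg \<longleftrightarrow> (\<exists>i<q'. Phi tau (x i - z) = 0)"
  unfolding Pol_def Phi_zero_iff[OF tau] by simp

lemma Pol_closed: "closed Pg"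
proof -
  have "Pg = (\<Union>i<q'. {z. Phi tau (x i - z) = 0})" by (auto simp: Pol_iff)
  moreover have "closed {z. Phi tau (x i - z) = 0}" for i
  proof (rule closed_Collect_eq)
    have "continuous_on UNIV (Phi tau \<circ> (\<lambda>z. x i - z))"
      by (rule continuous_on_compose) (auto intro!: continuous_intros Phi_cont[OF tau])
    thus "continuous_on UNIV (\<lambda>z. Phi tau (x i - z))" by (simp add: o_def)
  qed simp
  ultimately show ?thesis by (simp add: closed_UN)
qed

lemma Pol_shift: "l \<in> lattice tau \<Longrightarrow> z + l \<in> Pg \<longleftrightarrow> z \<in> Pg"
proof -
  assume l: "l \<in> lattice tau"
  have "x i - (z + l) \<in> lattice tau \<longleftrightarrow> x i - z \<in> lattice tau" for i
  proof
    assume "x i - (z + l) \<in> lattice tau"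
    from lattice_add[OF this l] show "x i - z \<in> lattice tau" by simp
  next
    assume "x i - z \<in> lattice tau"
    from lattice_diff[OF this l] show "x i - (z + l) \<in> lattice tau" by (simp add: algebra_simps)
  qed
  thus ?thesis unfolding Pol_def by simp
qed

lemma gx_diff: assumes "x i - z \<notin> lattice tau" shows "(\<lambda>z. gg (x i - z)) field_differentiable at z"
proof -
  have "(gg \<circ> (\<lambda>z. x i - z)) field_differentiable at z"
    by (rule field_differentiable_compose)
       (auto intro!: field_differentiable_diff field_differentiable_ident field_differentiable_const gf_field_diff[OF tau N] assms)
  thus ?thesis by (simp add: o_def)
qed

lemma gx_holo: assumes "open U" "\<And>z. z \<in> U \<Longrightarrow> x i - z \<notin> lattice tau"
  shows "(\<lambda>z. gg (x i - z)) holomorphic_on U"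
  unfolding holomorphic_on_def
proof
  fix z assume "z \<in> U"
  hence "(\<lambda>z. gg (x i - z)) field_differentiable at z" using gx_diff assms(2) by blast
  thus "(\<lambda>z. gg (x i - z)) field_differentiable at z within U" by (rule field_differentiable_at_within)
qed

lemma DD_holo: "Dg holomorphic_on (- Pg)"
proof -
  have o: "open (- Pg)" using Pol_closed by auto
  have h: "(\<lambda>z. gg (x i - z)) holomorphic_on (- Pg)" if "i < q'" for i
    by (rule gx_holo[OF o]) (use that in \<open>auto simp: Pol_def\<close>)
  show ?thesis unfolding DD_def[abs_def] FF_def
    by (intro holomorphic_intros h) auto
qed


lemma lim_at_xi:
  assumes i: "i < q'"
  shows "\<exists>L. (Dg \<longlongrightarrow> L) (at (x i)) \<and> eventually (\<lambda>z. z \<notin> Pg) (at (x i))"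
proof -
  define I where "I = {..<q'} - {i}"
  define R where "R = (\<lambda>z. \<Prod>j\<in>I. gg (x j - z))"
  define Oth where "Oth = (\<lambda>z. \<Sum>j\<in>I. cc N tau q' x j * gg (x j - z))"
  define V where "V = - (\<Union>j\<in>I. {z. Phi tau (x j - z) = 0})"
  have clo: "closed {z. Phi tau (x j - z) = 0}" for j
  proof (rule closed_Collect_eq)
    have "continuous_on UNIV (Phi tau \<circ> (\<lambda>z. x j - z))"
      by (rule continuous_on_compose) (auto intro!: continuous_intros Phi_cont[OF tau])
    thus "continuous_on UNIV (\<lambda>z. Phi tau (x j - z))" by (simp add: o_def)
  qed simp
  have Vo: "open V" unfolding V_def using clo by (auto simp: I_def intro!: closed_UN)
  have VL: "z \<in> V \<Longrightarrow> j \<in> I \<Longrightarrow> x j - z \<notin> lattice tau" for z j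
    unfolding V_def using Phi_zero_iff[OF tau] by blast
  have xiV: "x i \<in> V"
  proof -
    have "Phi tau (x j - x i) \<noteq> 0" if "j \<in> I" for j
      using xd[OF _ i, of j] that Phi_zero_iff[OF tau] by (auto simp: I_def)
    thus ?thesis unfolding V_def by auto
  qed
  have Rh: "R holomorphic_on V" unfolding R_def
    by (intro holomorphic_on_prod gx_holo[OF Vo] VL) auto
  have Oh: "Oth holomorphic_on V" unfolding Oth_def
    by (intro holomorphic_on_sum holomorphic_on_mult holomorphic_on_const gx_holo[OF Vo] VL) auto
  have cci: "cc N tau q' x i = R (x i)" unfolding cc_def R_def I_def ..
  have dec: "Dg z = gg (x i - z) * (R z - R (x i)) - Oth z" for z
  proof -
    have "FF N tau q' x z = gg (x i - z) * R z"
      unfolding FF_def R_def I_def using i by (subst prod.remove[of _ i]) auto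
    moreover have "(\<Sum>j<q'. cc N tau q' x j * gg (x j - z)) = cc N tau q' x i * gg (x i - z) + Oth z"
      unfolding Oth_def I_def using i by (subst sum.remove[of _ i]) auto
    ultimately show ?thesis unfolding DD_def cci by (simp add: algebra_simps)
  qed
  obtain R' where R': "(R has_field_derivative R') (at (x i))"
    using holomorphic_on_imp_differentiable_at[OF Rh Vo xiV] unfolding field_differentiable_def by blast
  have l1: "((\<lambda>y. (R y - R (x i)) / (y - x i)) \<longlongrightarrow> R') (at (x i))"
    using R' unfolding has_field_derivative_iff .
  have l2: "((\<lambda>z. (x i - z) * gg (x i - z)) \<longlongrightarrow> 1) (at (x i))"
    using filterlim_compose[OF u_gf[OF tau N] neg_filterlim] .
  have Oc: "isCont Oth (x i)"
    using holomorphic_on_imp_differentiable_at[OF Oh Vo xiV] field_differentiable_imp_continuous_at by blast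
  have l3: "((\<lambda>z. ((x i - z) * gg (x i - z)) * (- ((R z - R (x i)) / (z - x i))) - Oth z) \<longlongrightarrow> 1 * (- R') - Oth (x i)) (at (x i))"
    by (intro tendsto_intros l1 l2 Oc[unfolded isCont_def])
  have lim: "(Dg \<longlongrightarrow> 1 * (- R') - Oth (x i)) (at (x i))"
  proof (rule Lim_transform_eventually[OF l3])
    show "\<forall>\<^sub>F z in at (x i). (x i - z) * gg (x i - z) * - ((R z - R (x i)) / (z - x i)) - Oth z = Dg z"
      unfolding eventually_at_filter dec
    proof (rule always_eventually, intro allI impI)
      fix z assume "z \<noteq> x i"
      hence "z - x i \<noteq> 0" by simp
      thus "(x i - z) * gg (x i - z) * - ((R z - R (x i)) / (z - x i)) - Oth z = gg (x i - z) * (R z - R (x i)) - Oth z"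
        by (simp add: field_simps)
    qed
  qed
  have ev1: "eventually (\<lambda>z. Phi tau (x i - z) \<noteq> 0) (at (x i))"
  proof -
    have "((\<lambda>z. Phi tau (x i - z) / (x i - z)) \<longlongrightarrow> 1) (at (x i))"
      using filterlim_compose[OF Phi_over_u[OF tau N] neg_filterlim] .
    hence "eventually (\<lambda>z. Phi tau (x i - z) / (x i - z) \<noteq> 0) (at (x i))"
      by (rule tendsto_imp_eventually_ne) simp
    thus ?thesis by (rule eventually_mono) auto
  qed
  have ev2: "eventually (\<lambda>z. z \<in> V) (at (x i))"
    by (rule nhds_to_at, rule eventually_nhds_in_open[OF Vo xiV])
  have ev: "eventually (\<lambda>z. z \<notin> Pg) (at (x i))"
    using ev1 ev2
  proof eventually_elim
    case (elim z)
    have "x j - z \<notin> lattice tau" if "j < q'" for j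
    proof (cases "j = i")
      case True thus ?thesis using elim(1) Phi_zero_iff[OF tau] by blast
    next
      case False thus ?thesis using VL[OF elim(2)] that by (auto simp: I_def)
    qed
    thus ?case unfolding Pol_def by blast
  qed
  show ?thesis using lim ev by blast
qed

lemma pole_lim:
  assumes p: "p \<in> Pg"
  shows "\<exists>L. (Dg \<longlongrightarrow> L) (at p) \<and> eventually (\<lambda>z. z \<notin> Pg) (at p)"
proof -
  obtain i where i: "i < q'" and l: "x i - p \<in> lattice tau" using p unfolding Pol_def by blast
  define l where "l = x i - p"
  have lL: "l \<in> lattice tau" using l l_def by simp
  obtain m :: int where m: "\<And>z. Dg (z + l) = exp (of_int m * ag) * Dg z"
    using DD_lattice'[OF lL] by blast
  define e where "e = exp (of_int m * ag)"
  have e: "e \<noteq> 0" unfolding e_def by simp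
  obtain L where L: "(Dg \<longlongrightarrow> L) (at (x i))" and evi: "eventually (\<lambda>z. z \<notin> Pg) (at (x i))"
    using lim_at_xi[OF i] by blast
  have fl: "filterlim (\<lambda>z. z + l) (at (x i)) (at p)"
    using shift_filterlim[of l p] by (simp add: l_def)
  have "((\<lambda>z. Dg (z + l) / e) \<longlongrightarrow> L / e) (at p)"
    by (intro tendsto_divide filterlim_compose[OF L fl] tendsto_const e)
  hence lim: "(Dg \<longlongrightarrow> L / e) (at p)"
    using m e by (simp add: e_def)
  have "eventually (\<lambda>z. z + l \<notin> Pg) (at p)"
    using fl evi unfolding filterlim_iff by blast
  hence "eventually (\<lambda>z. z \<notin> Pg) (at p)"
    by (rule eventually_mono) (use Pol_shift[OF lL] in blast)
  with lim show ?thesis by blast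
qed

lemma Dt_diff: "Dtg field_differentiable at z"
proof (cases "z \<in> Pg")
  case False
  have o: "open (- Pg)" using Pol_closed by auto
  have "Dtg holomorphic_on (- Pg)"
    by (rule holomorphic_transform[OF DD_holo]) (simp add: DDt_def)
  thus ?thesis using holomorphic_on_imp_differentiable_at[OF _ o] False by blast
next
  case True
  obtain L where L: "(Dg \<longlongrightarrow> L) (at z)" and ev: "eventually (\<lambda>y. y \<notin> Pg) (at z)"
    using pole_lim[OF True] by blast
  obtain d where d: "d > 0" and dP: "\<And>y. y \<noteq> z \<Longrightarrow> dist y z < d \<Longrightarrow> y \<notin> Pg"
    using ev unfolding eventually_at by auto
  have sub: "ball z d - {z} \<subseteq> - Pg" using dP by (auto simp: dist_commute)
  have h1: "Dg holomorphic_on (ball z d - {z})"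
    by (rule holomorphic_on_subset[OF DD_holo sub])
  have h2: "(\<lambda>y. if y = z then L else Dg y) holomorphic_on ball z d"
    by (rule removable_singularity[OF h1 open_ball L])
  have LL: "Lim (at z) Dg = L" by (rule tendsto_Lim[OF _ L]) simp
  have h3: "Dtg holomorphic_on ball z d"
  proof (rule holomorphic_transform[OF h2])
    fix y assume y: "y \<in> ball z d"
    show "(if y = z then L else Dg y) = Dtg y"
    proof (cases "y = z")
      case True thus ?thesis using \<open>z \<in> Pg\<close> LL by (simp add: DDt_def)
    next
      case False
      hence "y \<notin> Pg" using y dP by (auto simp: dist_commute)
      thus ?thesis using False by (simp add: DDt_def)
    qed
  qed
  show ?thesis by (rule holomorphic_on_imp_differentiable_at[OF h3 open_ball]) (use d in simp)
qed

lemma Dt_holo: "Dtg holomorphic_on UNIV"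
  unfolding holomorphic_on_def using Dt_diff field_differentiable_at_within by blast

lemma Dt_shift:
  assumes lL: "l \<in> lattice tau" and m: "\<And>y. Dg (y + l) = e * Dg y"
  shows "Dtg (z + l) = e * Dtg z"
proof (cases "z \<in> Pg")
  case False
  hence "z + l \<notin> Pg" using Pol_shift[OF lL] by blast
  thus ?thesis using False m by (simp add: DDt_def)
next
  case True
  hence zl: "z + l \<in> Pg" using Pol_shift[OF lL] by blast
  obtain L where L: "(Dg \<longlongrightarrow> L) (at z)"
    using pole_lim[OF True] by blast
  have fl: "filterlim (\<lambda>y. y + - l) (at z) (at (z + l))"
    using shift_filterlim[of "- l" "z + l"] by simp
  have "((\<lambda>y. e * Dg (y + - l)) \<longlongrightarrow> e * L) (at (z + l))"
    by (intro tendsto_mult tendsto_const filterlim_compose[OF L fl])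
  moreover have "e * Dg (y + - l) = Dg y" for y
    using m[of "y + - l"] by simp
  ultimately have lim: "(Dg \<longlongrightarrow> e * L) (at (z + l))" by simp
  have "Dtg (z + l) = e * L" using zl tendsto_Lim[OF _ lim] by (simp add: DDt_def)
  moreover have "Dtg z = L" using True tendsto_Lim[OF _ L] by (simp add: DDt_def)
  ultimately show ?thesis by simp
qed

lemma decomp:
  "\<exists>s t m n. s \<in> {0..1} \<and> t \<in> {0..1} \<and>
     z = 2 * pi * \<i> * (of_real s * tau + of_real t) + 2 * pi * \<i> * (of_int m * tau + of_int n)"
proof -
  define w where "w = z / (2 * pi * \<i>)"
  define s0 where "s0 = Im w / Im tau"
  define t0 where "t0 = Re w - s0 * Re tau"
  have w: "w = of_real s0 * tau + of_real t0"
    using tau by (intro complex_eqI) (simp_all add: s0_def t0_def)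
  define m where "m = floor s0"
  define n where "n = floor t0"
  have s: "s0 - of_int m \<in> {0..1}" unfolding m_def atLeastAtMost_iff using of_int_floor_le[of s0] real_of_int_floor_add_one_gt[of s0] by linarith
  have t: "t0 - of_int n \<in> {0..1}" unfolding n_def atLeastAtMost_iff using of_int_floor_le[of t0] real_of_int_floor_add_one_gt[of t0] by linarith
  have "z = 2 * pi * \<i> * w" unfolding w_def by simp
  also have "\<dots> = 2 * pi * \<i> * (of_real (s0 - of_int m) * tau + of_real (t0 - of_int n))
                 + 2 * pi * \<i> * (of_int m * tau + of_int n)"
    unfolding w by (simp add: algebra_simps)
  finally show ?thesis using s t by blast
qed

lemma Dt_bounded: "bounded (range Dtg)"
proof -
  define K where "K = (\<lambda>p::real \<times> real. 2 * pi * \<i> * (of_real (fst p) * tau + of_real (snd p))) ` ({0..1} \<times> {0..1})"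
  have "compact K" unfolding K_def
    by (intro compact_continuous_image compact_Times compact_Icc) (auto intro!: continuous_intros)
  moreover have "continuous_on K Dtg"
    using Dt_holo holomorphic_on_imp_continuous_on continuous_on_subset by blast
  ultimately have "compact (Dtg ` K)" by (rule compact_continuous_image[rotated])
  then obtain B where B: "\<And>y. y \<in> Dtg ` K \<Longrightarrow> norm y \<le> B"
    using compact_imp_bounded bounded_iff by metis
  have "norm (Dtg z) \<le> B" for z
  proof -
    obtain s t m n where st: "s \<in> {0..1}" "t \<in> {0..1}"
      and z: "z = 2 * pi * \<i> * (of_real s * tau + of_real t) + 2 * pi * \<i> * (of_int m * tau + of_int n)"
      using decomp by blast
    define k where "k = 2 * pi * \<i> * (of_real s * tau + of_real t)"
    have kK: "k \<in> K" unfolding K_def k_def using st by force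
    have "Dtg z = exp (of_int (- m) * ag) * Dtg k"
      unfolding z k_def[symmetric]
      by (rule Dt_shift[OF _ DD_lattice]) (auto simp: mem_lattice)
    hence "norm (Dtg z) = norm (Dtg k)" by (simp add: norm_mult norm_om)
    also have "\<dots> \<le> B" using B kK by blast
    finally show ?thesis .
  qed
  thus ?thesis unfolding bounded_iff by blast
qed

lemma D0: "Dg 0 = 0"
proof -
  obtain c where c: "\<And>z. Dtg z = c"
    using Liouville_theorem[OF Dt_holo Dt_bounded] unfolding constant_on_def by blast
  define T where "T = 2 * pi * \<i> * (of_int 1 * tau + of_int 0)"
  have TL: "T \<in> lattice tau" unfolding T_def mem_lattice by blast
  have "Dtg (0 + T) = exp (of_int (- 1) * ag) * Dtg 0"
    unfolding T_def by (rule Dt_shift[OF _ DD_lattice]) (unfold mem_lattice, blast)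
  hence cc: "c = exp (- ag) * c" using c by simp
  have ne: "exp (- ag) \<noteq> 1"
  proof
    assume "exp (- ag) = 1"
    then obtain j :: int where "- ag = 2 * pi * \<i> * of_int j" using exp_eq_1_int by blast
    hence "- 2 * pi * \<i> / of_nat N = 2 * pi * \<i> * (of_int 0 * tau + of_int j)" by simp
    hence "- 2 * pi * \<i> / of_nat N \<in> lattice tau" unfolding mem_lattice by blast
    thus False using na_notin[OF tau N] by blast
  qed
  have c0: "c = 0"
  proof (rule ccontr)
    assume "c \<noteq> 0"
    with cc have "exp (- ag) = 1" by (metis mult_cancel_right1)
    with ne show False ..
  qed
  have "0 \<notin> Pg" unfolding Pol_def using xL by auto
  hence "Dtg 0 = Dg 0" by (simp add: DDt_def)
  thus ?thesis using c c0 by simp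
qed

end

theorem lemma3p2p3:
  fixes N q' :: nat and tau :: complex and x :: "nat \<Rightarrow> complex"
  assumes "N \<ge> 2" and "Im tau > 0"
    and "q' \<ge> 1" and "q' mod N = 1 mod N"
    and "\<And>i. i < q' \<Longrightarrow> x i \<notin> lattice tau"
    and "\<And>i j. i < q' \<Longrightarrow> j < q' \<Longrightarrow> i \<noteq> j \<Longrightarrow> x i - x j \<notin> lattice tau"
  shows "(\<Sum>i<q'. (1 / ellf N tau (x i)) *
            (\<Prod>j\<in>{..<q'} - {i}. 1 / ellf N tau (x j - x i)))
         - (\<Prod>i<q'. 1 / ellf N tau (x i)) = 0"
proof -
  have "DD N tau q' x 0 = 0"
    by (rule D0) (use assms in auto)
  thus ?thesis unfolding inv_ellf DD_def FF_def cc_def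
    by (simp add: mult.commute)
qed

end
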